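(* Let $\mathcal{C}$ be a monoidal category and $\mathcal{D}$ a non-strict monoidal category, let $F,G:\mathcal{C}\to\mathcal{D}$ be strong monoidal functors and let $\widehat{F},\widehat{G}:\mathcal{C}_q\to\mathcal{D}$ be the unique strict monoidal functors with $\widehat{F}\circ j=F$ and $\widehat{G}\circ j=G$. For every monoidal natural transformation $\alpha:F\Rightarrow G$ there exists a unique monoidal natural transformation $\widehat{\alpha}:\widehat{F}\Rightarrow\widehat{G}$ such that $\widehat{\alpha}\, j=\alpha$ (i.e. $\widehat{\alpha}_{((X),\bullet)}=\alpha_X$ for all $X$).
   Context: $\mathrm{Mag}(\bullet)$ is the free unital magma on one generator $\bullet$; $|t|$ is the number of bullets. Non-strictification $\mathcal{C}_q$ of $(\mathcal{C},\otimes,\mathbf{1},a,\ell,r)$: objects are pairs $(S,t)$, $S$ a finite sequence of objects of $\mathcal{C}$, $t\in\mathrm{Mag}(\bullet)$, $|t|=$ length of $S$. $\mathrm{Par}(\emptyset,\emptyset)=\mathbf{1}$, $\mathrm{Par}((X),\bullet)=X$, and for $|t|>1$, $t=t_1t_2$ uniquely with $|t_k|\ge1$, $S=S_1*S_2$ with $S_k$ of length $|t_k|$, $\mathrm{Par}(S,t)=\mathrm{Par}(S_1,t_1)\otimes\mathrm{Par}(S_2,t_2)$. $\mathrm{Hom}_{\mathcal{C}_q}((S,t),(S',t'))=\mathrm{Hom}_{\mathcal{C}}(\mathrm{Par}(S,t),\mathrm{Par}(S',t'))$. Monoidal structure: $(S,t)*(S',t')=(S*S',tt')$, unit $(\emptyset,\emptyset)$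 (strict), $f*g:=f\otimes g$ for nonempty factors, identity unit constraints, associativity constraint $a_q$ with $\mathrm{Par}(a_q)=a_{\mathrm{Par}(S,t),\mathrm{Par}(S',t'),\mathrm{Par}(S'',t'')}$. The embedding $j(X)=((X),\bullet)$ is strong monoidal with constraints corresponding to identities. A natural transformation $\alpha:F\Rightarrow G$ between monoidal functors $(F,\gamma,u)$, $(G,\gamma',u')$ is monoidal if $\alpha_{\mathbf{1}}\circ u=u'$ and $\alpha_{X\otimes Y}\circ\gamma_{X,Y}=\gamma'_{X,Y}\circ(\alpha_X\boxtimes\alpha_Y)$. *)

theory Defs
  imports Main
begin

record ('o, 'm) cat =
  cObj :: "'o set"
  cArr :: "'m set"
  cdom :: "'m \<Rightarrow> 'o"
  ccod :: "'m \<Rightarrow> 'o"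
  ccomp :: "'m \<Rightarrow> 'm \<Rightarrow> 'm"   (* ccomp C g f = g \<circ> f *)
  cid :: "'o \<Rightarrow> 'm"

record ('o, 'm) moncat = "('o, 'm) cat" +
  tensO :: "'o \<Rightarrow> 'o \<Rightarrow> 'o"
  tensA :: "'m \<Rightarrow> 'm \<Rightarrow> 'm"
  munit :: "'o"
  massoc :: "'o \<Rightarrow> 'o \<Rightarrow> 'o \<Rightarrow> 'm"
  mlunit :: "'o \<Rightarrow> 'm"
  mrunit :: "'o \<Rightarrow> 'm"

definition hom :: "('o, 'm, 'z) cat_scheme \<Rightarrow> 'o \<Rightarrow> 'o \<Rightarrow> 'm set" where
  "hom C X Y = {f \<in> cArr C. cdom C f = X \<and> ccod C f = Y}"

definition category :: "('o, 'm, 'z) cat_scheme \<Rightarrow> bool" where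
  "category C \<longleftrightarrow>
     (\<forall>f \<in> cArr C. cdom C f \<in> cObj C \<and> ccod C f \<in> cObj C) \<and>
     (\<forall>X \<in> cObj C. cid C X \<in> hom C X X) \<and>
     (\<forall>f \<in> cArr C. \<forall>g \<in> cArr C. ccod C f = cdom C g \<longrightarrow>
        ccomp C g f \<in> hom C (cdom C f) (ccod C g)) \<and>
     (\<forall>f \<in> cArr C. ccomp C f (cid C (cdom C f)) = f \<and> ccomp C (cid C (ccod C f)) f = f) \<and>
     (\<forall>f \<in> cArr C. \<forall>g \<in> cArr C. \<forall>h \<in> cArr C.
        ccod C f = cdom C g \<longrightarrow> ccod C g = cdom C h \<longrightarrow>
        ccomp C h (ccomp C g f) = ccomp C (ccomp C h g) f)"

definition iso :: "('o, 'm, 'z) cat_scheme \<Rightarrow> 'm \<Rightarrow> bool" where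
  "iso C f \<longleftrightarrow> f \<in> cArr C \<and>
     (\<exists>g \<in> hom C (ccod C f) (cdom C f).
        ccomp C g f = cid C (cdom C f) \<and> ccomp C f g = cid C (ccod C f))"

definition inv_arr :: "('o, 'm, 'z) cat_scheme \<Rightarrow> 'm \<Rightarrow> 'm" where
  "inv_arr C f = (SOME g. g \<in> hom C (ccod C f) (cdom C f) \<and>
        ccomp C g f = cid C (cdom C f) \<and> ccomp C f g = cid C (ccod C f))"

definition monoidal_category :: "('o, 'm, 'z) moncat_scheme \<Rightarrow> bool" where
  "monoidal_category C \<longleftrightarrow> category C \<and>
     \<comment> \<open>tensor is a bifunctor\<close>
     (\<forall>X \<in> cObj C. \<forall>Y \<in> cObj C. tensO C X Y \<in> cObj C) \<and>
     (\<forall>f \<in> cArr C. \<forall>g \<in> cArr C.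
        tensA C f g \<in> hom C (tensO C (cdom C f) (cdom C g)) (tensO C (ccod C f) (ccod C g))) \<and>
     (\<forall>X \<in> cObj C. \<forall>Y \<in> cObj C. tensA C (cid C X) (cid C Y) = cid C (tensO C X Y)) \<and>
     (\<forall>f \<in> cArr C. \<forall>g \<in> cArr C. \<forall>f' \<in> cArr C. \<forall>g' \<in> cArr C.
        ccod C f = cdom C g \<longrightarrow> ccod C f' = cdom C g' \<longrightarrow>
        tensA C (ccomp C g f) (ccomp C g' f') = ccomp C (tensA C g g') (tensA C f f')) \<and>
     \<comment> \<open>unit and constraints\<close>
     munit C \<in> cObj C \<and>
     (\<forall>X \<in> cObj C. \<forall>Y \<in> cObj C. \<forall>Z \<in> cObj C.
        massoc C X Y Z \<in> hom C (tensO C (tensO C X Y) Z) (tensO C X (tensO C Y Z)) \<and>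
        iso C (massoc C X Y Z)) \<and>
     (\<forall>X \<in> cObj C. mlunit C X \<in> hom C (tensO C (munit C) X) X \<and> iso C (mlunit C X)) \<and>
     (\<forall>X \<in> cObj C. mrunit C X \<in> hom C (tensO C X (munit C)) X \<and> iso C (mrunit C X)) \<and>
     \<comment> \<open>naturality\<close>
     (\<forall>f \<in> cArr C. \<forall>g \<in> cArr C. \<forall>h \<in> cArr C.
        ccomp C (tensA C f (tensA C g h)) (massoc C (cdom C f) (cdom C g) (cdom C h)) =
        ccomp C (massoc C (ccod C f) (ccod C g) (ccod C h)) (tensA C (tensA C f g) h)) \<and>
     (\<forall>f \<in> cArr C. ccomp C f (mlunit C (cdom C f)) =
        ccomp C (mlunit C (ccod C f)) (tensA C (cid C (munit C)) f)) \<and>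
     (\<forall>f \<in> cArr C. ccomp C f (mrunit C (cdom C f)) =
        ccomp C (mrunit C (ccod C f)) (tensA C f (cid C (munit C)))) \<and>
     \<comment> \<open>pentagon\<close>
     (\<forall>W \<in> cObj C. \<forall>X \<in> cObj C. \<forall>Y \<in> cObj C. \<forall>Z \<in> cObj C.
        ccomp C (massoc C W X (tensO C Y Z)) (massoc C (tensO C W X) Y Z) =
        ccomp C (tensA C (cid C W) (massoc C X Y Z))
          (ccomp C (massoc C W (tensO C X Y) Z) (tensA C (massoc C W X Y) (cid C Z)))) \<and>
     \<comment> \<open>triangle\<close>
     (\<forall>X \<in> cObj C. \<forall>Y \<in> cObj C.
        ccomp C (tensA C (cid C X) (mlunit C Y)) (massoc C X (munit C) Y) =
        tensA C (mrunit C X) (cid C Y))"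

text \<open>A non-strict monoidal category: a monoidal category whose unit is strict
  (unit constraints are identities), while the associativity constraint is arbitrary.\<close>
definition nonstrict_monoidal_category :: "('o, 'm, 'z) moncat_scheme \<Rightarrow> bool" where
  "nonstrict_monoidal_category C \<longleftrightarrow> monoidal_category C \<and>
     (\<forall>X \<in> cObj C. tensO C (munit C) X = X \<and> tensO C X (munit C) = X \<and>
        mlunit C X = cid C X \<and> mrunit C X = cid C X)"

definition is_functor :: "('o, 'm, 'z) cat_scheme \<Rightarrow> ('p, 'n, 'y) cat_scheme \<Rightarrow>
    ('o \<Rightarrow> 'p) \<Rightarrow> ('m \<Rightarrow> 'n) \<Rightarrow> bool" where
  "is_functor C D Fo Fa \<longleftrightarrow>
     (\<forall>X \<in> cObj C. Fo X \<in> cObj D) \<and>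
     (\<forall>f \<in> cArr C. Fa f \<in> hom D (Fo (cdom C f)) (Fo (ccod C f))) \<and>
     (\<forall>X \<in> cObj C. Fa (cid C X) = cid D (Fo X)) \<and>
     (\<forall>f \<in> cArr C. \<forall>g \<in> cArr C. ccod C f = cdom C g \<longrightarrow>
        Fa (ccomp C g f) = ccomp D (Fa g) (Fa f))"

definition monoidal_functor :: "('o, 'm, 'z) moncat_scheme \<Rightarrow> ('p, 'n, 'y) moncat_scheme \<Rightarrow>
    ('o \<Rightarrow> 'p) \<Rightarrow> ('m \<Rightarrow> 'n) \<Rightarrow> ('o \<Rightarrow> 'o \<Rightarrow> 'n) \<Rightarrow> 'n \<Rightarrow> bool" where
  "monoidal_functor C D Fo Fa \<gamma> u \<longleftrightarrow> is_functor C D Fo Fa \<and>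
     (\<forall>X \<in> cObj C. \<forall>Y \<in> cObj C. \<gamma> X Y \<in> hom D (tensO D (Fo X) (Fo Y)) (Fo (tensO C X Y))) \<and>
     u \<in> hom D (munit D) (Fo (munit C)) \<and>
     (\<forall>f \<in> cArr C. \<forall>g \<in> cArr C.
        ccomp D (Fa (tensA C f g)) (\<gamma> (cdom C f) (cdom C g)) =
        ccomp D (\<gamma> (ccod C f) (ccod C g)) (tensA D (Fa f) (Fa g))) \<and>
     (\<forall>X \<in> cObj C. \<forall>Y \<in> cObj C. \<forall>Z \<in> cObj C.
        ccomp D (Fa (massoc C X Y Z))
          (ccomp D (\<gamma> (tensO C X Y) Z) (tensA D (\<gamma> X Y) (cid D (Fo Z)))) =
        ccomp D (\<gamma> X (tensO C Y Z))
          (ccomp D (tensA D (cid D (Fo X)) (\<gamma> Y Z)) (massoc D (Fo X) (Fo Y) (Fo Z)))) \<and>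
     (\<forall>X \<in> cObj C.
        ccomp D (Fa (mlunit C X)) (ccomp D (\<gamma> (munit C) X) (tensA D u (cid D (Fo X))))
          = mlunit D (Fo X)) \<and>
     (\<forall>X \<in> cObj C.
        ccomp D (Fa (mrunit C X)) (ccomp D (\<gamma> X (munit C)) (tensA D (cid D (Fo X)) u))
          = mrunit D (Fo X))"

definition strong_monoidal_functor :: "('o, 'm, 'z) moncat_scheme \<Rightarrow> ('p, 'n, 'y) moncat_scheme \<Rightarrow>
    ('o \<Rightarrow> 'p) \<Rightarrow> ('m \<Rightarrow> 'n) \<Rightarrow> ('o \<Rightarrow> 'o \<Rightarrow> 'n) \<Rightarrow> 'n \<Rightarrow> bool" where
  "strong_monoidal_functor C D Fo Fa \<gamma> u \<longleftrightarrow> monoidal_functor C D Fo Fa \<gamma> u \<and>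
     (\<forall>X \<in> cObj C. \<forall>Y \<in> cObj C. iso D (\<gamma> X Y)) \<and> iso D u"

definition strict_monoidal_functor :: "('o, 'm, 'z) moncat_scheme \<Rightarrow> ('p, 'n, 'y) moncat_scheme \<Rightarrow>
    ('o \<Rightarrow> 'p) \<Rightarrow> ('m \<Rightarrow> 'n) \<Rightarrow> ('o \<Rightarrow> 'o \<Rightarrow> 'n) \<Rightarrow> 'n \<Rightarrow> bool" where
  "strict_monoidal_functor C D Fo Fa \<gamma> u \<longleftrightarrow> monoidal_functor C D Fo Fa \<gamma> u \<and>
     (\<forall>X \<in> cObj C. \<forall>Y \<in> cObj C. \<gamma> X Y = cid D (tensO D (Fo X) (Fo Y))) \<and>
     u = cid D (munit D)"

definition nat_trans :: "('o, 'm, 'z) cat_scheme \<Rightarrow> ('p, 'n, 'y) cat_scheme \<Rightarrow>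
    ('o \<Rightarrow> 'p) \<Rightarrow> ('m \<Rightarrow> 'n) \<Rightarrow> ('o \<Rightarrow> 'p) \<Rightarrow> ('m \<Rightarrow> 'n) \<Rightarrow> ('o \<Rightarrow> 'n) \<Rightarrow> bool" where
  "nat_trans C D Fo Fa Go Ga \<alpha> \<longleftrightarrow>
     (\<forall>X \<in> cObj C. \<alpha> X \<in> hom D (Fo X) (Go X)) \<and>
     (\<forall>f \<in> cArr C. ccomp D (\<alpha> (ccod C f)) (Fa f) = ccomp D (Ga f) (\<alpha> (cdom C f)))"

definition monoidal_nat_trans :: "('o, 'm, 'z) moncat_scheme \<Rightarrow> ('p, 'n, 'y) moncat_scheme \<Rightarrow>
    ('o \<Rightarrow> 'p) \<Rightarrow> ('m \<Rightarrow> 'n) \<Rightarrow> ('o \<Rightarrow> 'o \<Rightarrow> 'n) \<Rightarrow> 'n \<Rightarrow>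
    ('o \<Rightarrow> 'p) \<Rightarrow> ('m \<Rightarrow> 'n) \<Rightarrow> ('o \<Rightarrow> 'o \<Rightarrow> 'n) \<Rightarrow> 'n \<Rightarrow> ('o \<Rightarrow> 'n) \<Rightarrow> bool" where
  "monoidal_nat_trans C D Fo Fa \<gamma> u Go Ga \<gamma>' u' \<alpha> \<longleftrightarrow>
     nat_trans C D Fo Fa Go Ga \<alpha> \<and>
     ccomp D (\<alpha> (munit C)) u = u' \<and>
     (\<forall>X \<in> cObj C. \<forall>Y \<in> cObj C.
        ccomp D (\<alpha> (tensO C X Y)) (\<gamma> X Y) = ccomp D (\<gamma>' X Y) (tensA D (\<alpha> X) (\<alpha> Y)))"

text \<open>Elements: the unit MU, the generator MB (bullet), and products MN t1 t2 of two
  non-unit elements (well-formedness mwf).\<close>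
datatype mag = MU | MB | MN mag mag

fun msize :: "mag \<Rightarrow> nat" where
  "msize MU = 0"
| "msize MB = 1"
| "msize (MN a b) = msize a + msize b"

fun mwf :: "mag \<Rightarrow> bool" where
  "mwf MU = True"
| "mwf MB = True"
| "mwf (MN a b) = (a \<noteq> MU \<and> b \<noteq> MU \<and> mwf a \<and> mwf b)"

definition mmul :: "mag \<Rightarrow> mag \<Rightarrow> mag" where
  "mmul a b = (if a = MU then b else if b = MU then a else MN a b)"

fun par :: "('o, 'm, 'z) moncat_scheme \<Rightarrow> mag \<Rightarrow> 'o list \<Rightarrow> 'o" where
  "par C MU S = munit C"
| "par C MB S = hd S"
| "par C (MN t1 t2) S = tensO C (par C t1 (take (msize t1) S)) (par C t2 (drop (msize t1) S))"

type_synonym 'o qobj = "'o list \<times> mag"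
type_synonym ('o, 'm) qarr = "'o qobj \<times> 'o qobj \<times> 'm"

definition Par :: "('o, 'm, 'z) moncat_scheme \<Rightarrow> 'o qobj \<Rightarrow> 'o" where
  "Par C A = par C (snd A) (fst A)"

definition qObj :: "('o, 'm, 'z) moncat_scheme \<Rightarrow> 'o qobj set" where
  "qObj C = {(S, t). mwf t \<and> msize t = length S \<and> set S \<subseteq> cObj C}"

definition qtensO :: "'o qobj \<Rightarrow> 'o qobj \<Rightarrow> 'o qobj" where
  "qtensO A B = (fst A @ fst B, mmul (snd A) (snd B))"

definition qphi :: "('o, 'm, 'z) moncat_scheme \<Rightarrow> 'o qobj \<Rightarrow> 'o qobj \<Rightarrow> 'm" where
  "qphi C A B = (if snd A = MU then mlunit C (Par C B)
                 else if snd B = MU then mrunit C (Par C A)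
                 else cid C (tensO C (Par C A) (Par C B)))"

definition qcat :: "('o, 'm, 'z) moncat_scheme \<Rightarrow> ('o qobj, ('o, 'm) qarr) moncat" where
  "qcat C = \<lparr>
     cObj = qObj C,
     cArr = {(A, B, f). A \<in> qObj C \<and> B \<in> qObj C \<and> f \<in> hom C (Par C A) (Par C B)},
     cdom = (\<lambda>(A, B, f). A),
     ccod = (\<lambda>(A, B, f). B),
     ccomp = (\<lambda>(B', C', g) (A, B, f). (A, C', ccomp C g f)),
     cid = (\<lambda>A. (A, A, cid C (Par C A))),
     tensO = qtensO,
     tensA = (\<lambda>(A, B, f) (A', B', g). (qtensO A A', qtensO B B',
                ccomp C (qphi C B B') (ccomp C (tensA C f g) (inv_arr C (qphi C A A'))))),
     munit = ([], MU),
     massoc = (\<lambda>A B E. (qtensO (qtensO A B) E, qtensO A (qtensO B E),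
                if snd A \<noteq> MU \<and> snd B \<noteq> MU \<and> snd E \<noteq> MU
                then massoc C (Par C A) (Par C B) (Par C E)
                else cid C (Par C (qtensO A (qtensO B E))))),
     mlunit = (\<lambda>A. (A, A, cid C (Par C A))),
     mrunit = (\<lambda>A. (A, A, cid C (Par C A)))
   \<rparr>"

definition jO :: "'o \<Rightarrow> 'o qobj" where
  "jO X = ([X], MB)"

definition jA :: "('o, 'm, 'z) moncat_scheme \<Rightarrow> 'm \<Rightarrow> ('o, 'm) qarr" where
  "jA C f = (jO (cdom C f), jO (ccod C f), f)"

definition j\<gamma> :: "('o, 'm, 'z) moncat_scheme \<Rightarrow> 'o \<Rightarrow> 'o \<Rightarrow> ('o, 'm) qarr" where
  "j\<gamma> C X Y = (qtensO (jO X) (jO Y), jO (tensO C X Y), cid C (tensO C X Y))"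

definition ju :: "('o, 'm, 'z) moncat_scheme \<Rightarrow> ('o, 'm) qarr" where
  "ju C = (([], MU), jO (munit C), cid C (munit C))"

text \<open>Equality of monoidal functors Fh \<circ> j = F (object and arrow maps and both
  structure constraints, the composite constraints being the usual ones).\<close>
definition extends_along_j :: "('o, 'm, 'z) moncat_scheme \<Rightarrow> ('p, 'n, 'y) moncat_scheme \<Rightarrow>
    ('o qobj \<Rightarrow> 'p) \<Rightarrow> (('o, 'm) qarr \<Rightarrow> 'n) \<Rightarrow> ('o qobj \<Rightarrow> 'o qobj \<Rightarrow> 'n) \<Rightarrow> 'n \<Rightarrow>
    ('o \<Rightarrow> 'p) \<Rightarrow> ('m \<Rightarrow> 'n) \<Rightarrow> ('o \<Rightarrow> 'o \<Rightarrow> 'n) \<Rightarrow> 'n \<Rightarrow> bool" where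
  "extends_along_j C D Fho Fha Fh\<gamma> Fhu Fo Fa F\<gamma> Fu \<longleftrightarrow>
     (\<forall>X \<in> cObj C. Fho (jO X) = Fo X) \<and>
     (\<forall>f \<in> cArr C. Fha (jA C f) = Fa f) \<and>
     (\<forall>X \<in> cObj C. \<forall>Y \<in> cObj C.
        ccomp D (Fha (j\<gamma> C X Y)) (Fh\<gamma> (jO X) (jO Y)) = F\<gamma> X Y) \<and>
     ccomp D (Fha (ju C)) Fhu = Fu"

end

theory Submission
  imports Defs
begin


lemma cat_id: "category C \<Longrightarrow> X \<in> cObj C \<Longrightarrow> cid C X \<in> hom C X X"
  by (simp add: category_def)
lemma cat_obj: "category C \<Longrightarrow> f \<in> hom C X Y \<Longrightarrow> X \<in> cObj C \<and> Y \<in> cObj C"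
  by (auto simp: category_def hom_def)
lemma cat_comp: "category C \<Longrightarrow> f \<in> hom C X Y \<Longrightarrow> g \<in> hom C Y Z \<Longrightarrow> ccomp C g f \<in> hom C X Z"
  by (auto simp: category_def hom_def)
lemma cat_idl: "category C \<Longrightarrow> f \<in> hom C X Y \<Longrightarrow> ccomp C (cid C Y) f = f"
  by (auto simp: category_def hom_def)
lemma cat_idr: "category C \<Longrightarrow> f \<in> hom C X Y \<Longrightarrow> ccomp C f (cid C X) = f"
  by (auto simp: category_def hom_def)
lemma cat_assoc: "category C \<Longrightarrow> f \<in> hom C X Y \<Longrightarrow> g \<in> hom C Y Z \<Longrightarrow> h \<in> hom C Z W \<Longrightarrow>
   ccomp C h (ccomp C g f) = ccomp C (ccomp C h g) f"
  by (auto simp: category_def hom_def)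

lemma cat_inv_id: assumes c: "category C" and X: "X \<in> cObj C"
  shows "inv_arr C (cid C X) = cid C X"
proof -
  have h: "cid C X \<in> hom C X X" using cat_id[OF c X] .
  hence d: "cdom C (cid C X) = X" "ccod C (cid C X) = X" by (auto simp: hom_def)
  show ?thesis unfolding inv_arr_def d
  proof (rule some_equality)
    show "cid C X \<in> hom C X X \<and> ccomp C (cid C X) (cid C X) = cid C X \<and> ccomp C (cid C X) (cid C X) = cid C X"
      using h cat_idl[OF c h] by simp
  next
    fix g assume "g \<in> hom C X X \<and> ccomp C g (cid C X) = cid C X \<and> ccomp C (cid C X) g = cid C X"
    then show "g = cid C X" using cat_idr[OF c] by metis
  qed
qed

lemma mc_cat: "monoidal_category C \<Longrightarrow> category C"
  by (simp add: monoidal_category_def)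
lemma mc_tobj: "monoidal_category C \<Longrightarrow> X \<in> cObj C \<Longrightarrow> Y \<in> cObj C \<Longrightarrow> tensO C X Y \<in> cObj C"
  by (simp add: monoidal_category_def)
lemma mc_unit: "monoidal_category C \<Longrightarrow> munit C \<in> cObj C"
  by (simp add: monoidal_category_def)
lemma mc_tens: "monoidal_category C \<Longrightarrow> f \<in> hom C X Y \<Longrightarrow> g \<in> hom C X' Y' \<Longrightarrow>
   tensA C f g \<in> hom C (tensO C X X') (tensO C Y Y')"
  unfolding monoidal_category_def by (auto simp: hom_def)
lemma mc_tid: "monoidal_category C \<Longrightarrow> X \<in> cObj C \<Longrightarrow> Y \<in> cObj C \<Longrightarrow>
   tensA C (cid C X) (cid C Y) = cid C (tensO C X Y)"
  by (simp add: monoidal_category_def)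
lemma mc_inter: "monoidal_category C \<Longrightarrow> f \<in> hom C X Y \<Longrightarrow> g \<in> hom C Y Z \<Longrightarrow>
   f' \<in> hom C X' Y' \<Longrightarrow> g' \<in> hom C Y' Z' \<Longrightarrow>
   tensA C (ccomp C g f) (ccomp C g' f') = ccomp C (tensA C g g') (tensA C f f')"
  unfolding monoidal_category_def by (auto simp: hom_def)

lemma ns_lu: assumes n: "nonstrict_monoidal_category D" and f: "f \<in> hom D X Y"
  shows "tensA D (cid D (munit D)) f = f"
proof -
  have m: "monoidal_category D" using n by (simp add: nonstrict_monoidal_category_def)
  have c: "category D" using m mc_cat by blast
  have XY: "X \<in> cObj D" "Y \<in> cObj D" using cat_obj[OF c f] by auto
  have fa: "f \<in> cArr D" "cdom D f = X" "ccod D f = Y" using f by (auto simp: hom_def)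
  have "ccomp D f (mlunit D (cdom D f)) = ccomp D (mlunit D (ccod D f)) (tensA D (cid D (munit D)) f)"
    using m fa(1) unfolding monoidal_category_def by blast
  moreover have "mlunit D X = cid D X" "mlunit D Y = cid D Y" "tensO D (munit D) X = X" "tensO D (munit D) Y = Y"
    using n XY by (auto simp: nonstrict_monoidal_category_def)
  moreover have "tensA D (cid D (munit D)) f \<in> hom D (tensO D (munit D) X) (tensO D (munit D) Y)"
    using mc_tens[OF m cat_id[OF c mc_unit[OF m]] f] .
  ultimately show ?thesis using cat_idr[OF c f] cat_idl[OF c] fa by metis
qed

lemma ns_ru: assumes n: "nonstrict_monoidal_category D" and f: "f \<in> hom D X Y"
  shows "tensA D f (cid D (munit D)) = f"
proof -
  have m: "monoidal_category D" using n by (simp add: nonstrict_monoidal_category_def)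
  have c: "category D" using m mc_cat by blast
  have XY: "X \<in> cObj D" "Y \<in> cObj D" using cat_obj[OF c f] by auto
  have fa: "f \<in> cArr D" "cdom D f = X" "ccod D f = Y" using f by (auto simp: hom_def)
  have "ccomp D f (mrunit D (cdom D f)) = ccomp D (mrunit D (ccod D f)) (tensA D f (cid D (munit D)))"
    using m fa(1) unfolding monoidal_category_def by blast
  moreover have "mrunit D X = cid D X" "mrunit D Y = cid D Y" "tensO D X (munit D) = X" "tensO D Y (munit D) = Y"
    using n XY by (auto simp: nonstrict_monoidal_category_def)
  moreover have "tensA D f (cid D (munit D)) \<in> hom D (tensO D X (munit D)) (tensO D Y (munit D))"
    using mc_tens[OF m f cat_id[OF c mc_unit[OF m]]] .
  ultimately show ?thesis using cat_idr[OF c f] cat_idl[OF c] fa by metis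
qed

lemma par_obj: "monoidal_category C \<Longrightarrow> mwf t \<Longrightarrow> msize t = length S \<Longrightarrow> set S \<subseteq> cObj C \<Longrightarrow>
  par C t S \<in> cObj C"
proof (induction t arbitrary: S)
  case MU then show ?case by (simp add: mc_unit)
next
  case MB then show ?case by (cases S) auto
next
  case (MN t1 t2)
  have "par C t1 (take (msize t1) S) \<in> cObj C"
    using MN by (intro MN.IH(1)) (auto dest: in_set_takeD)
  moreover have "par C t2 (drop (msize t1) S) \<in> cObj C"
    using MN by (intro MN.IH(2)) (auto dest: in_set_dropD)
  ultimately show ?case using MN by (simp add: mc_tobj)
qed

lemma Par_obj: "monoidal_category C \<Longrightarrow> A \<in> qObj C \<Longrightarrow> Par C A \<in> cObj C"
  by (auto simp: qObj_def Par_def intro: par_obj)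

lemma qobj_split:
  assumes "(S, MN t1 t2) \<in> qObj C"
  shows "(take (msize t1) S, t1) \<in> qObj C" "(drop (msize t1) S, t2) \<in> qObj C"
    "qtensO (take (msize t1) S, t1) (drop (msize t1) S, t2) = (S, MN t1 t2)"
    "t1 \<noteq> MU" "t2 \<noteq> MU"
    "Par C (S, MN t1 t2) = tensO C (Par C (take (msize t1) S, t1)) (Par C (drop (msize t1) S, t2))"
  using assms by (auto simp: qObj_def qtensO_def mmul_def Par_def dest: in_set_takeD in_set_dropD)

lemma jO_obj: "X \<in> cObj C \<Longrightarrow> jO X \<in> qObj C"
  by (simp add: jO_def qObj_def)
lemma Par_jO[simp]: "Par C (jO X) = X" by (simp add: jO_def Par_def)
lemma Par_unit[simp]: "Par C ([], MU) = munit C" by (simp add: Par_def)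
lemma unit_obj: "([], MU) \<in> qObj C" by (simp add: qObj_def)

lemma Q_simps:
  "cObj (qcat C) = qObj C" "cdom (qcat C) (A,B,f) = A" "ccod (qcat C) (A,B,f) = B"
  "ccomp (qcat C) (B',E,g) (A,B,f) = (A,E,ccomp C g f)"
  "cid (qcat C) A = (A,A,cid C (Par C A))" "tensO (qcat C) = qtensO" "munit (qcat C) = ([],MU)"
  "(A,B,f) \<in> cArr (qcat C) \<longleftrightarrow> A \<in> qObj C \<and> B \<in> qObj C \<and> f \<in> hom C (Par C A) (Par C B)"
  by (simp_all add: qcat_def)

lemma Q_arr_objs: "f \<in> cArr (qcat C) \<Longrightarrow> cdom (qcat C) f \<in> qObj C \<and> ccod (qcat C) f \<in> qObj C"
  by (cases f) (simp add: Q_simps)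



locale sfun =
  fixes C :: "('o, 'm) moncat" and D :: "('p, 'n) moncat"
    and Ho :: "'o \<Rightarrow> 'p" and Ha :: "'m \<Rightarrow> 'n" and H\<gamma> :: "'o \<Rightarrow> 'o \<Rightarrow> 'n" and Hu :: 'n
    and Hho :: "'o qobj \<Rightarrow> 'p" and Hha :: "('o, 'm) qarr \<Rightarrow> 'n"
    and Hh\<gamma> :: "'o qobj \<Rightarrow> 'o qobj \<Rightarrow> 'n" and Hhu :: 'n
  assumes mC: "monoidal_category C" and mD: "monoidal_category D"
    and sm: "strong_monoidal_functor C D Ho Ha H\<gamma> Hu"
    and st: "strict_monoidal_functor (qcat C) D Hho Hha Hh\<gamma> Hhu"
    and ex: "extends_along_j C D Hho Hha Hh\<gamma> Hhu Ho Ha H\<gamma> Hu"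
begin

lemma cC: "category C" using mC mc_cat by blast
lemma cD: "category D" using mD mc_cat by blast

lemma mf: "monoidal_functor (qcat C) D Hho Hha Hh\<gamma> Hhu"
  using st unfolding strict_monoidal_functor_def by blast
lemma fn: "is_functor (qcat C) D Hho Hha"
  using mf by (simp add: monoidal_functor_def)

lemma ha_hom: "f \<in> cArr (qcat C) \<Longrightarrow> Hha f \<in> hom D (Hho (cdom (qcat C) f)) (Hho (ccod (qcat C) f))"
  using fn by (simp add: is_functor_def)
lemma ha_homt: "(A,B,h) \<in> cArr (qcat C) \<Longrightarrow> Hha (A,B,h) \<in> hom D (Hho A) (Hho B)"
  using ha_hom[of "(A,B,h)"] by (simp add: Q_simps)
lemma ha_compt: "(A,B,h) \<in> cArr (qcat C) \<Longrightarrow> (B,E,k) \<in> cArr (qcat C) \<Longrightarrow>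
   Hha (A,E,ccomp C k h) = ccomp D (Hha (B,E,k)) (Hha (A,B,h))"
  using fn unfolding is_functor_def
  by (metis Q_simps(2,3,4))
lemma ha_id: "A \<in> qObj C \<Longrightarrow> Hha (A,A,cid C (Par C A)) = cid D (Hho A)"
  using fn unfolding is_functor_def by (metis Q_simps(1,5))
lemma ho_obj: "A \<in> qObj C \<Longrightarrow> Hho A \<in> cObj D"
  using fn unfolding is_functor_def by (metis Q_simps(1))

lemma hg: "A \<in> qObj C \<Longrightarrow> B \<in> qObj C \<Longrightarrow> Hh\<gamma> A B = cid D (tensO D (Hho A) (Hho B))"
  using st by (simp add: strict_monoidal_functor_def Q_simps)
lemma hu: "Hhu = cid D (munit D)"
  using st by (simp add: strict_monoidal_functor_def Q_simps)

lemma ho_tens: assumes "A \<in> qObj C" "B \<in> qObj C"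
  shows "Hho (qtensO A B) = tensO D (Hho A) (Hho B)"
proof -
  have "Hh\<gamma> A B \<in> hom D (tensO D (Hho A) (Hho B)) (Hho (qtensO A B))"
    using mf assms unfolding monoidal_functor_def by (simp add: Q_simps)
  moreover have "cid D (tensO D (Hho A) (Hho B)) \<in> hom D (tensO D (Hho A) (Hho B)) (tensO D (Hho A) (Hho B))"
    using cat_id[OF cD] mc_tobj[OF mD] ho_obj assms by blast
  ultimately show ?thesis using hg[OF assms] by (simp add: hom_def)
qed

lemma ho_unit: "Hho ([], MU) = munit D"
proof -
  have "Hhu \<in> hom D (munit D) (Hho ([], MU))"
    using mf unfolding monoidal_functor_def by (simp add: Q_simps)
  moreover have "cid D (munit D) \<in> hom D (munit D) (munit D)"
    using cat_id[OF cD mc_unit[OF mD]] .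
  ultimately show ?thesis using hu by (simp add: hom_def)
qed

lemma ha_tens:
  assumes f: "f \<in> cArr (qcat C)" and g: "g \<in> cArr (qcat C)" and t: "tensA (qcat C) f g \<in> cArr (qcat C)"
    and td: "cdom (qcat C) (tensA (qcat C) f g) = qtensO (cdom (qcat C) f) (cdom (qcat C) g)"
    and tc: "ccod (qcat C) (tensA (qcat C) f g) = qtensO (ccod (qcat C) f) (ccod (qcat C) g)"
  shows "Hha (tensA (qcat C) f g) = tensA D (Hha f) (Hha g)"
proof -
  let ?Q = "qcat C"
  have o: "cdom ?Q f \<in> qObj C" "ccod ?Q f \<in> qObj C" "cdom ?Q g \<in> qObj C" "ccod ?Q g \<in> qObj C"
    using Q_arr_objs f g by blast+
  have eq: "ccomp D (Hha (tensA ?Q f g)) (Hh\<gamma> (cdom ?Q f) (cdom ?Q g)) =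
        ccomp D (Hh\<gamma> (ccod ?Q f) (ccod ?Q g)) (tensA D (Hha f) (Hha g))"
    using mf f g unfolding monoidal_functor_def by blast
  have h1: "Hha (tensA ?Q f g) \<in> hom D (tensO D (Hho (cdom ?Q f)) (Hho (cdom ?Q g)))
     (tensO D (Hho (ccod ?Q f)) (Hho (ccod ?Q g)))"
    using ha_hom[OF t] td tc ho_tens o by simp
  have h2: "tensA D (Hha f) (Hha g) \<in> hom D (tensO D (Hho (cdom ?Q f)) (Hho (cdom ?Q g)))
     (tensO D (Hho (ccod ?Q f)) (Hho (ccod ?Q g)))"
    using mc_tens[OF mD ha_hom[OF f] ha_hom[OF g]] .
  show ?thesis using eq hg o cat_idl[OF cD h2] cat_idr[OF cD h1] by simp
qed

lemma ho_j: "X \<in> cObj C \<Longrightarrow> Hho (jO X) = Ho X"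
  using ex by (simp add: extends_along_j_def)
lemma ha_j: "f \<in> cArr C \<Longrightarrow> Hha (jA C f) = Ha f"
  using ex by (simp add: extends_along_j_def)

lemma jg_arr: "X \<in> cObj C \<Longrightarrow> Y \<in> cObj C \<Longrightarrow> j\<gamma> C X Y \<in> cArr (qcat C)"
  using cat_id[OF cC mc_tobj[OF mC]]
  by (simp add: j\<gamma>_def Q_simps jO_def qtensO_def mmul_def qObj_def Par_def mc_tobj[OF mC])

lemma ha_jg: assumes X: "X \<in> cObj C" and Y: "Y \<in> cObj C"
  shows "Hha (j\<gamma> C X Y) = H\<gamma> X Y"
proof -
  have e: "ccomp D (Hha (j\<gamma> C X Y)) (Hh\<gamma> (jO X) (jO Y)) = H\<gamma> X Y"
    using ex X Y by (simp add: extends_along_j_def)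
  have h: "Hha (j\<gamma> C X Y) \<in> hom D (tensO D (Hho (jO X)) (Hho (jO Y))) (Hho (jO (tensO C X Y)))"
    using ha_hom[OF jg_arr[OF X Y]] ho_tens[OF jO_obj[OF X] jO_obj[OF Y]]
    by (simp add: j\<gamma>_def Q_simps)
  show ?thesis using e hg[OF jO_obj[OF X] jO_obj[OF Y]] cat_idr[OF cD h] by simp
qed

lemma ju_arr: "ju C \<in> cArr (qcat C)"
  using cat_id[OF cC mc_unit[OF mC]] jO_obj[OF mc_unit[OF mC]]
  by (simp add: ju_def Q_simps unit_obj)

lemma ha_ju: "Hha (ju C) = Hu"
proof -
  have e: "ccomp D (Hha (ju C)) Hhu = Hu"
    using ex by (simp add: extends_along_j_def)
  have h: "Hha (ju C) \<in> hom D (munit D) (Hho (jO (munit C)))"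
    using ha_hom[OF ju_arr] ho_unit by (simp add: ju_def Q_simps)
  show ?thesis using e hu cat_idr[OF cD h] by simp
qed

lemma hu_hom: "Hu \<in> hom D (munit D) (Ho (munit C))"
  using sm by (simp add: strong_monoidal_functor_def monoidal_functor_def)

end



fun ahf :: "('p, 'n, 'y) moncat_scheme \<Rightarrow> ('o \<Rightarrow> 'n) \<Rightarrow> mag \<Rightarrow> 'o list \<Rightarrow> 'n" where
  "ahf D \<alpha> MU S = cid D (munit D)"
| "ahf D \<alpha> MB S = \<alpha> (hd S)"
| "ahf D \<alpha> (MN t1 t2) S = tensA D (ahf D \<alpha> t1 (take (msize t1) S)) (ahf D \<alpha> t2 (drop (msize t1) S))"

locale mainl = F: sfun C D Fo Fa F\<gamma> Fu Fho Fha Fh\<gamma> Fhu + G: sfun C D Go Ga G\<gamma> Gu Gho Gha Gh\<gamma> Ghu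
  for C :: "('o, 'm) moncat" and D :: "('p, 'n) moncat"
    and Fo Fa F\<gamma> Fu Fho Fha Fh\<gamma> Fhu Go Ga G\<gamma> Gu Gho Gha Gh\<gamma> Ghu +
  fixes \<alpha> :: "'o \<Rightarrow> 'n"
  assumes nD: "nonstrict_monoidal_category D"
    and ma: "monoidal_nat_trans C D Fo Fa F\<gamma> Fu Go Ga G\<gamma> Gu \<alpha>"
begin

definition AH :: "'o qobj \<Rightarrow> 'n" where "AH A = ahf D \<alpha> (snd A) (fst A)"

lemmas cD = F.cD
lemmas cC = F.cC
lemmas mC = F.mC
lemmas mD = F.mD

lemma a_hom: "X \<in> cObj C \<Longrightarrow> \<alpha> X \<in> hom D (Fo X) (Go X)"
  using ma by (simp add: monoidal_nat_trans_def nat_trans_def)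
lemma a_nat: "f \<in> cArr C \<Longrightarrow> ccomp D (\<alpha> (ccod C f)) (Fa f) = ccomp D (Ga f) (\<alpha> (cdom C f))"
  using ma by (simp add: monoidal_nat_trans_def nat_trans_def)
lemma a_unit: "ccomp D (\<alpha> (munit C)) Fu = Gu"
  using ma by (simp add: monoidal_nat_trans_def)
lemma a_tens: "X \<in> cObj C \<Longrightarrow> Y \<in> cObj C \<Longrightarrow>
   ccomp D (\<alpha> (tensO C X Y)) (F\<gamma> X Y) = ccomp D (G\<gamma> X Y) (tensA D (\<alpha> X) (\<alpha> Y))"
  using ma by (simp add: monoidal_nat_trans_def)

lemma AH_j[simp]: "AH (jO X) = \<alpha> X" by (simp add: AH_def jO_def)
lemma AH_unit[simp]: "AH ([], MU) = cid D (munit D)" by (simp add: AH_def)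
lemma AH_split: "(S, MN t1 t2) \<in> qObj C \<Longrightarrow>
   AH (S, MN t1 t2) = tensA D (AH (take (msize t1) S, t1)) (AH (drop (msize t1) S, t2))"
  by (simp add: AH_def)

lemma qobj_induct[consumes 1, case_names U B N]:
  assumes A: "A \<in> qObj C"
    and U: "P ([], MU)"
    and B: "\<And>X. X \<in> cObj C \<Longrightarrow> P (jO X)"
    and N: "\<And>S t1 t2. (S, MN t1 t2) \<in> qObj C \<Longrightarrow> P (take (msize t1) S, t1) \<Longrightarrow> P (drop (msize t1) S, t2)
              \<Longrightarrow> P (S, MN t1 t2)"
  shows "P A"
proof -
  obtain S t where At: "A = (S, t)" by (cases A)
  have "(S, t) \<in> qObj C \<Longrightarrow> P (S, t)"
  proof (induction t arbitrary: S)
    case MU then show ?case using U by (simp add: qObj_def)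
  next
    case MB
    then obtain X where "S = [X]" "X \<in> cObj C" by (cases S) (auto simp: qObj_def)
    then show ?case using B by (simp add: jO_def)
  next
    case (MN t1 t2)
    show ?case using N[OF MN.prems] MN.IH qobj_split[OF MN.prems] by blast
  qed
  then show ?thesis using A At by simp
qed

lemma AH_hom: "A \<in> qObj C \<Longrightarrow> AH A \<in> hom D (Fho A) (Gho A)"
proof (induction rule: qobj_induct)
  case U then show ?case using cat_id[OF cD mc_unit[OF mD]] F.ho_unit G.ho_unit by simp
next
  case (B X) then show ?case using a_hom F.ho_j G.ho_j by simp
next
  case (N S t1 t2)
  note s = qobj_split[OF N(1)]
  have "AH (S, MN t1 t2) \<in> hom D (tensO D (Fho (take (msize t1) S, t1)) (Fho (drop (msize t1) S, t2)))
     (tensO D (Gho (take (msize t1) S, t1)) (Gho (drop (msize t1) S, t2)))"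
    using AH_split[OF N(1)] mc_tens[OF mD N(2) N(3)] by simp
  then show ?case using F.ho_tens[OF s(1,2)] G.ho_tens[OF s(1,2)] s(3) by simp
qed

lemma AH_tens: assumes A: "A \<in> qObj C" and B: "B \<in> qObj C"
  shows "AH (qtensO A B) = tensA D (AH A) (AH B)"
proof -
  obtain SA tA where a: "A = (SA, tA)" by (cases A)
  obtain SB tB where b: "B = (SB, tB)" by (cases B)
  have la: "msize tA = length SA" using A a by (simp add: qObj_def)
  show ?thesis
  proof (cases "tA = MU")
    case True
    then have "SA = []" using la by simp
    then show ?thesis using True a b ns_lu[OF nD AH_hom[OF B]] by (simp add: qtensO_def mmul_def)
  next
    case nA: False
    show ?thesis
    proof (cases "tB = MU")
      case True
      then have "SB = []" using B b by (simp add: qObj_def)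
      then show ?thesis using True nA a b ns_ru[OF nD AH_hom[OF A]] by (simp add: qtensO_def mmul_def)
    next
      case False
      then show ?thesis using nA a b la by (simp add: qtensO_def mmul_def AH_def)
    qed
  qed
qed

definition N :: "('o, 'm) qarr \<Rightarrow> bool" where
  "N f \<longleftrightarrow> ccomp D (AH (ccod (qcat C) f)) (Fha f) = ccomp D (Gha f) (AH (cdom (qcat C) f))"

lemma Nt: "N (A,B,h) \<longleftrightarrow> ccomp D (AH B) (Fha (A,B,h)) = ccomp D (Gha (A,B,h)) (AH A)"
  by (simp add: N_def Q_simps)

lemma nat_comp:
  assumes f: "(A,B,h) \<in> cArr (qcat C)" and g: "(B,E,k) \<in> cArr (qcat C)" and Nf: "N (A,B,h)" and Ng: "N (B,E,k)"
  shows "N (A,E,ccomp C k h)"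
proof -
  have o: "A \<in> qObj C" "B \<in> qObj C" "E \<in> qObj C" using f g by (auto simp: Q_simps)
  note hF1 = F.ha_homt[OF f] and hF2 = F.ha_homt[OF g] and hG1 = G.ha_homt[OF f] and hG2 = G.ha_homt[OF g]
  note a1 = AH_hom[OF o(1)] and a2 = AH_hom[OF o(2)] and a3 = AH_hom[OF o(3)]
  have "ccomp D (AH E) (Fha (A,E,ccomp C k h)) = ccomp D (AH E) (ccomp D (Fha (B,E,k)) (Fha (A,B,h)))"
    using F.ha_compt[OF f g] by simp
  also have "\<dots> = ccomp D (ccomp D (AH E) (Fha (B,E,k))) (Fha (A,B,h))"
    using cat_assoc[OF cD hF1 hF2 a3] .
  also have "\<dots> = ccomp D (ccomp D (Gha (B,E,k)) (AH B)) (Fha (A,B,h))"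
    using Ng by (simp add: Nt)
  also have "\<dots> = ccomp D (Gha (B,E,k)) (ccomp D (AH B) (Fha (A,B,h)))"
    using cat_assoc[OF cD hF1 a2 hG2] by simp
  also have "\<dots> = ccomp D (Gha (B,E,k)) (ccomp D (Gha (A,B,h)) (AH A))"
    using Nf by (simp add: Nt)
  also have "\<dots> = ccomp D (ccomp D (Gha (B,E,k)) (Gha (A,B,h))) (AH A)"
    using cat_assoc[OF cD a1 hG1 hG2] .
  also have "\<dots> = ccomp D (Gha (A,E,ccomp C k h)) (AH A)"
    using G.ha_compt[OF f g] by simp
  finally show ?thesis by (simp add: Nt)
qed

lemma nat_inv:
  assumes f: "(A,B,h) \<in> cArr (qcat C)" and g: "(B,A,k) \<in> cArr (qcat C)"
    and kh: "ccomp C k h = cid C (Par C A)" and hk: "ccomp C h k = cid C (Par C B)"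
    and Nf: "N (A,B,h)"
  shows "N (B,A,k)"
proof -
  have o: "A \<in> qObj C" "B \<in> qObj C" using f g by (auto simp: Q_simps)
  note hF1 = F.ha_homt[OF f] and hF2 = F.ha_homt[OF g] and hG1 = G.ha_homt[OF f] and hG2 = G.ha_homt[OF g]
  note a1 = AH_hom[OF o(1)] and a2 = AH_hom[OF o(2)]
  have GG: "ccomp D (Gha (B,A,k)) (Gha (A,B,h)) = cid D (Gho A)"
    using G.ha_compt[OF f g] G.ha_id[OF o(1)] kh by simp
  have FF: "ccomp D (Fha (A,B,h)) (Fha (B,A,k)) = cid D (Fho B)"
    using F.ha_compt[OF g f] F.ha_id[OF o(2)] hk by simp
  have c1: "ccomp D (Gha (A,B,h)) (AH A) \<in> hom D (Fho A) (Gho B)" using cat_comp[OF cD a1 hG1] .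
  have "ccomp D (AH A) (Fha (B,A,k)) = ccomp D (ccomp D (cid D (Gho A)) (AH A)) (Fha (B,A,k))"
    using cat_idl[OF cD a1] by simp
  also have "\<dots> = ccomp D (ccomp D (ccomp D (Gha (B,A,k)) (Gha (A,B,h))) (AH A)) (Fha (B,A,k))"
    using GG by simp
  also have "\<dots> = ccomp D (ccomp D (Gha (B,A,k)) (ccomp D (Gha (A,B,h)) (AH A))) (Fha (B,A,k))"
    using cat_assoc[OF cD a1 hG1 hG2] by simp
  also have "\<dots> = ccomp D (ccomp D (Gha (B,A,k)) (ccomp D (AH B) (Fha (A,B,h)))) (Fha (B,A,k))"
    using Nf by (simp add: Nt)
  also have "\<dots> = ccomp D (Gha (B,A,k)) (ccomp D (ccomp D (AH B) (Fha (A,B,h))) (Fha (B,A,k)))"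
    using cat_assoc[OF cD hF2 cat_comp[OF cD hF1 a2] hG2] by simp
  also have "\<dots> = ccomp D (Gha (B,A,k)) (ccomp D (AH B) (ccomp D (Fha (A,B,h)) (Fha (B,A,k))))"
    using cat_assoc[OF cD hF2 hF1 a2] by simp
  also have "\<dots> = ccomp D (Gha (B,A,k)) (AH B)"
    using FF cat_idr[OF cD a2] by simp
  finally show ?thesis by (simp add: Nt)
qed

lemma nat_tens:
  assumes f: "(A,B,h) \<in> cArr (qcat C)" and g: "(A',B',k) \<in> cArr (qcat C)"
    and t: "tensA (qcat C) (A,B,h) (A',B',k) \<in> cArr (qcat C)"
    and Nf: "N (A,B,h)" and Ng: "N (A',B',k)"
  shows "N (tensA (qcat C) (A,B,h) (A',B',k))"
proof -
  let ?t = "tensA (qcat C) (A,B,h) (A',B',k)"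
  have td: "cdom (qcat C) ?t = qtensO A A'" and tc: "ccod (qcat C) ?t = qtensO B B'" by (simp_all add: qcat_def)
  have o: "A \<in> qObj C" "B \<in> qObj C" "A' \<in> qObj C" "B' \<in> qObj C" using f g by (auto simp: Q_simps)
  have Ft: "Fha ?t = tensA D (Fha (A,B,h)) (Fha (A',B',k))"
    using F.ha_tens[OF f g t] td tc by (simp add: Q_simps)
  have Gt: "Gha ?t = tensA D (Gha (A,B,h)) (Gha (A',B',k))"
    using G.ha_tens[OF f g t] td tc by (simp add: Q_simps)
  note hF1 = F.ha_homt[OF f] and hF2 = F.ha_homt[OF g] and hG1 = G.ha_homt[OF f] and hG2 = G.ha_homt[OF g]
  have "ccomp D (AH (qtensO B B')) (Fha ?t)
      = ccomp D (tensA D (AH B) (AH B')) (tensA D (Fha (A,B,h)) (Fha (A',B',k)))"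
    using AH_tens[OF o(2,4)] Ft by simp
  also have "\<dots> = tensA D (ccomp D (AH B) (Fha (A,B,h))) (ccomp D (AH B') (Fha (A',B',k)))"
    using mc_inter[OF mD hF1 AH_hom[OF o(2)] hF2 AH_hom[OF o(4)]] by simp
  also have "\<dots> = tensA D (ccomp D (Gha (A,B,h)) (AH A)) (ccomp D (Gha (A',B',k)) (AH A'))"
    using Nf Ng by (simp add: Nt)
  also have "\<dots> = ccomp D (tensA D (Gha (A,B,h)) (Gha (A',B',k))) (tensA D (AH A) (AH A'))"
    using mc_inter[OF mD AH_hom[OF o(1)] hG1 AH_hom[OF o(3)] hG2] .
  also have "\<dots> = ccomp D (Gha ?t) (AH (qtensO A A'))"
    using AH_tens[OF o(1,3)] Gt by simp
  finally show ?thesis unfolding N_def td tc .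
qed

lemma nat_j: "f \<in> cArr C \<Longrightarrow> N (jA C f)"
  using a_nat F.ha_j G.ha_j by (simp add: N_def jA_def Q_simps)

lemma nat_jg: assumes X: "X \<in> cObj C" and Y: "Y \<in> cObj C" shows "N (j\<gamma> C X Y)"
proof -
  have "AH (qtensO (jO X) (jO Y)) = tensA D (\<alpha> X) (\<alpha> Y)"
    by (simp add: AH_def qtensO_def jO_def mmul_def)
  then show ?thesis using a_tens[OF X Y] F.ha_jg[OF X Y] G.ha_jg[OF X Y]
    by (simp add: N_def j\<gamma>_def Q_simps)
qed

lemma nat_ju: "N (ju C)"
proof -
  have "ccomp D Gu (cid D (munit D)) = Gu" using cat_idr[OF cD G.hu_hom] .
  then show ?thesis using a_unit F.ha_ju G.ha_ju by (simp add: N_def ju_def Q_simps)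
qed

definition cq :: "'o qobj \<Rightarrow> ('o, 'm) qarr" where "cq A = (A, jO (Par C A), cid C (Par C A))"

lemma cq_arr: "A \<in> qObj C \<Longrightarrow> cq A \<in> cArr (qcat C)"
  using Par_obj[OF mC] jO_obj[OF Par_obj[OF mC]] cat_id[OF cC Par_obj[OF mC]] by (simp add: cq_def Q_simps)

lemma nat_cq: "A \<in> qObj C \<Longrightarrow> N (cq A)"
proof (induction rule: qobj_induct)
  case U then show ?case using nat_ju by (simp add: cq_def ju_def)
next
  case (B X)
  have "cdom C (cid C X) = X" "ccod C (cid C X) = X" "cid C X \<in> cArr C"
    using cat_id[OF cC B] by (auto simp: hom_def)
  then show ?case using nat_j[of "cid C X"] by (simp add: cq_def jA_def)
next
  case (N S t1 t2)
  note s = qobj_split[OF N(1)]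
  let ?A1 = "(take (msize t1) S, t1)" and ?A2 = "(drop (msize t1) S, t2)"
  define P1 where "P1 = Par C ?A1"
  define P2 where "P2 = Par C ?A2"
  have P: "P1 \<in> cObj C" "P2 \<in> cObj C" using Par_obj[OF mC] s P1_def P2_def by auto
  have P12: "tensO C P1 P2 \<in> cObj C" using mc_tobj[OF mC P] .
  have T: "tensA (qcat C) (cq ?A1) (cq ?A2) = ((S, MN t1 t2), qtensO (jO P1) (jO P2), cid C (tensO C P1 P2))"
    using s P P12 cat_inv_id[OF cC P12] mc_tid[OF mC P] cat_idl[OF cC cat_id[OF cC P12]]
    by (simp add: qcat_def cq_def qphi_def P1_def P2_def jO_def Par_jO[unfolded jO_def])
  have qj: "qtensO (jO P1) (jO P2) \<in> qObj C" "Par C (qtensO (jO P1) (jO P2)) = tensO C P1 P2"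
    using P by (simp_all add: qtensO_def jO_def qObj_def mmul_def Par_def)
  have Tarr: "((S, MN t1 t2), qtensO (jO P1) (jO P2), cid C (tensO C P1 P2)) \<in> cArr (qcat C)"
    using N(1) qj cat_id[OF cC P12] s(6) P1_def P2_def by (simp add: Q_simps)
  have NT: "N ((S, MN t1 t2), qtensO (jO P1) (jO P2), cid C (tensO C P1 P2))"
    using nat_tens[of ?A1 "jO P1" "cid C P1" ?A2 "jO P2" "cid C P2"]
      cq_arr[OF s(1)] cq_arr[OF s(2)] N(2,3) T Tarr by (simp add: cq_def P1_def P2_def)
  have jg: "j\<gamma> C P1 P2 = (qtensO (jO P1) (jO P2), jO (tensO C P1 P2), cid C (tensO C P1 P2))"
    by (simp add: j\<gamma>_def)
  have "N ((S, MN t1 t2), jO (tensO C P1 P2), ccomp C (cid C (tensO C P1 P2)) (cid C (tensO C P1 P2)))"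
    using nat_comp[OF Tarr _ NT] F.jg_arr[OF P] nat_jg[OF P] jg by simp
  then show ?case using cat_idl[OF cC cat_id[OF cC P12]] s(6) P1_def P2_def by (simp add: cq_def)
qed

lemma nat_all: assumes f: "(A,B,h) \<in> cArr (qcat C)" shows "N (A,B,h)"
proof -
  have o: "A \<in> qObj C" "B \<in> qObj C" and h: "h \<in> hom C (Par C A) (Par C B)" using f by (auto simp: Q_simps)
  have PA: "Par C A \<in> cObj C" and PB: "Par C B \<in> cObj C" using Par_obj[OF mC] o by auto
  have idA: "cid C (Par C A) \<in> hom C (Par C A) (Par C A)" using cat_id[OF cC PA] .
  have idB: "cid C (Par C B) \<in> hom C (Par C B) (Par C B)" using cat_id[OF cC PB] .
  have a1: "(A, jO (Par C A), cid C (Par C A)) \<in> cArr (qcat C)" using cq_arr[OF o(1)] by (simp add: cq_def)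
  have a2: "(jO (Par C A), jO (Par C B), h) \<in> cArr (qcat C)" using h jO_obj[OF PA] jO_obj[OF PB] by (simp add: Q_simps)
  have a3: "(jO (Par C B), B, cid C (Par C B)) \<in> cArr (qcat C)" using idB jO_obj[OF PB] o by (simp add: Q_simps)
  have b3: "(B, jO (Par C B), cid C (Par C B)) \<in> cArr (qcat C)" using cq_arr[OF o(2)] by (simp add: cq_def)
  have N1: "N (A, jO (Par C A), cid C (Par C A))" using nat_cq[OF o(1)] by (simp add: cq_def)
  have hj: "jA C h = (jO (Par C A), jO (Par C B), h)" using h by (simp add: jA_def hom_def)
  have N2: "N (jO (Par C A), jO (Par C B), h)" using nat_j[of h] h hj by (simp add: hom_def)
  have N3: "N (jO (Par C B), B, cid C (Par C B))"
    using nat_inv[OF b3 a3] cat_idl[OF cC idB] nat_cq[OF o(2)] by (simp add: cq_def)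
  have "N (A, jO (Par C B), ccomp C h (cid C (Par C A)))" using nat_comp[OF a1 a2 N1 N2] .
  hence N12: "N (A, jO (Par C B), h)" using cat_idr[OF cC h] by simp
  have a12: "(A, jO (Par C B), h) \<in> cArr (qcat C)" using h o jO_obj[OF PB] by (simp add: Q_simps)
  have "N (A, B, ccomp C (cid C (Par C B)) h)" using nat_comp[OF a12 a3 N12 N3] .
  then show ?thesis using cat_idl[OF cC h] by simp
qed

lemma existence: "monoidal_nat_trans (qcat C) D Fho Fha Fh\<gamma> Fhu Gho Gha Gh\<gamma> Ghu AH"
  unfolding monoidal_nat_trans_def nat_trans_def
proof (intro conjI ballI)
  fix X assume "X \<in> cObj (qcat C)" then show "AH X \<in> hom D (Fho X) (Gho X)" using AH_hom by (simp add: Q_simps)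
next
  fix f assume "f \<in> cArr (qcat C)"
  then show "ccomp D (AH (ccod (qcat C) f)) (Fha f) = ccomp D (Gha f) (AH (cdom (qcat C) f))"
    using nat_all unfolding N_def by (cases f) blast
next
  show "ccomp D (AH (munit (qcat C))) Fhu = Ghu"
    using F.hu G.hu cat_idl[OF cD cat_id[OF cD mc_unit[OF mD]]] by (simp add: Q_simps)
next
  fix X Y assume X: "X \<in> cObj (qcat C)" and Y: "Y \<in> cObj (qcat C)"
  then have o: "X \<in> qObj C" "Y \<in> qObj C" by (simp_all add: Q_simps)
  have h: "tensA D (AH X) (AH Y) \<in> hom D (tensO D (Fho X) (Fho Y)) (tensO D (Gho X) (Gho Y))"
    using mc_tens[OF mD AH_hom[OF o(1)] AH_hom[OF o(2)]] .
  show "ccomp D (AH (tensO (qcat C) X Y)) (Fh\<gamma> X Y) = ccomp D (Gh\<gamma> X Y) (tensA D (AH X) (AH Y))"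
    using AH_tens[OF o] F.hg[OF o] G.hg[OF o] cat_idl[OF cD h] cat_idr[OF cD h] by (simp add: Q_simps)
qed

lemma uniqueness:
  assumes b: "monoidal_nat_trans (qcat C) D Fho Fha Fh\<gamma> Fhu Gho Gha Gh\<gamma> Ghu \<beta>"
    and bj: "\<forall>X \<in> cObj C. \<beta> (jO X) = \<alpha> X"
    and A: "A \<in> qObj C"
  shows "\<beta> A = AH A"
  using A
proof (induction rule: qobj_induct)
  case U
  have "\<forall>X\<in>qObj C. \<beta> X \<in> hom D (Fho X) (Gho X)"
    using b by (simp add: monoidal_nat_trans_def nat_trans_def Q_simps)
  hence h: "\<beta> ([], MU) \<in> hom D (munit D) (munit D)"
    using unit_obj[of C] F.ho_unit G.ho_unit by metis
  have "ccomp D (\<beta> ([], MU)) Fhu = Ghu" using b by (simp add: monoidal_nat_trans_def Q_simps)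
  then show ?case using F.hu G.hu cat_idr[OF cD h] by simp
next
  case (B X) then show ?case using bj by simp
next
  case (N S t1 t2)
  note s = qobj_split[OF N(1)]
  let ?A1 = "(take (msize t1) S, t1)" and ?A2 = "(drop (msize t1) S, t2)"
  have e: "ccomp D (\<beta> (qtensO ?A1 ?A2)) (Fh\<gamma> ?A1 ?A2) = ccomp D (Gh\<gamma> ?A1 ?A2) (tensA D (\<beta> ?A1) (\<beta> ?A2))"
    using b s(1,2) unfolding monoidal_nat_trans_def by (simp add: Q_simps)
  have hb: "\<beta> (S, MN t1 t2) \<in> hom D (Fho (S, MN t1 t2)) (Gho (S, MN t1 t2))"
    using b N(1) by (simp add: monoidal_nat_trans_def nat_trans_def Q_simps)
  have h1: "\<beta> (S, MN t1 t2) \<in> hom D (tensO D (Fho ?A1) (Fho ?A2)) (tensO D (Gho ?A1) (Gho ?A2))"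
    using hb F.ho_tens[OF s(1,2)] G.ho_tens[OF s(1,2)] s(3) by simp
  have h2: "tensA D (\<beta> ?A1) (\<beta> ?A2) \<in> hom D (tensO D (Fho ?A1) (Fho ?A2)) (tensO D (Gho ?A1) (Gho ?A2))"
    using N(2,3) mc_tens[OF mD AH_hom[OF s(1)] AH_hom[OF s(2)]] by simp
  have "\<beta> (S, MN t1 t2) = tensA D (\<beta> ?A1) (\<beta> ?A2)"
    using e s(3) F.hg[OF s(1,2)] G.hg[OF s(1,2)] cat_idr[OF cD h1] cat_idl[OF cD h2] by simp
  then show ?case using N(2,3) AH_split[OF N(1)] by simp
qed

end

theorem mainTheorem8:
  fixes C :: "('o, 'm) moncat" and D :: "('p, 'n) moncat"
    and Fo Go :: "'o \<Rightarrow> 'p" and Fa Ga :: "'m \<Rightarrow> 'n"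
    and F\<gamma> G\<gamma> :: "'o \<Rightarrow> 'o \<Rightarrow> 'n" and Fu Gu :: 'n
    and Fho Gho :: "'o qobj \<Rightarrow> 'p" and Fha Gha :: "('o, 'm) qarr \<Rightarrow> 'n"
    and Fh\<gamma> Gh\<gamma> :: "'o qobj \<Rightarrow> 'o qobj \<Rightarrow> 'n" and Fhu Ghu :: 'n
    and \<alpha> :: "'o \<Rightarrow> 'n"
  assumes "monoidal_category C"
    and "nonstrict_monoidal_category D"
    and "strong_monoidal_functor C D Fo Fa F\<gamma> Fu"
    and "strong_monoidal_functor C D Go Ga G\<gamma> Gu"
    and "strict_monoidal_functor (qcat C) D Fho Fha Fh\<gamma> Fhu"
    and "extends_along_j C D Fho Fha Fh\<gamma> Fhu Fo Fa F\<gamma> Fu"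
    and "strict_monoidal_functor (qcat C) D Gho Gha Gh\<gamma> Ghu"
    and "extends_along_j C D Gho Gha Gh\<gamma> Ghu Go Ga G\<gamma> Gu"
    and "monoidal_nat_trans C D Fo Fa F\<gamma> Fu Go Ga G\<gamma> Gu \<alpha>"
  shows "\<exists>\<alpha>h. monoidal_nat_trans (qcat C) D Fho Fha Fh\<gamma> Fhu Gho Gha Gh\<gamma> Ghu \<alpha>h \<and>
              (\<forall>X \<in> cObj C. \<alpha>h (jO X) = \<alpha> X) \<and>
              (\<forall>\<beta>. monoidal_nat_trans (qcat C) D Fho Fha Fh\<gamma> Fhu Gho Gha Gh\<gamma> Ghu \<beta> \<and>
                    (\<forall>X \<in> cObj C. \<beta> (jO X) = \<alpha> X) \<longrightarrow>
                    (\<forall>A \<in> cObj (qcat C). \<beta> A = \<alpha>h A))"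
proof -
  have mD: "monoidal_category D" using assms(2) by (simp add: nonstrict_monoidal_category_def)
  interpret mainl C D Fo Fa F\<gamma> Fu Fho Fha Fh\<gamma> Fhu Go Ga G\<gamma> Gu Gho Gha Gh\<gamma> Ghu \<alpha>
    by (unfold_locales; (rule assms mD)?)
  show ?thesis
  proof (intro exI[of _ AH] conjI allI impI ballI)
    show "monoidal_nat_trans (qcat C) D Fho Fha Fh\<gamma> Fhu Gho Gha Gh\<gamma> Ghu AH" by (rule existence)
  next
    fix X show "AH (jO X) = \<alpha> X" by simp
  next
    fix \<beta> A
    assume b: "monoidal_nat_trans (qcat C) D Fho Fha Fh\<gamma> Fhu Gho Gha Gh\<gamma> Ghu \<beta> \<and>
               (\<forall>X\<in>cObj C. \<beta> (jO X) = \<alpha> X)"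
      and A: "A \<in> cObj (qcat C)"
    show "\<beta> A = AH A" using uniqueness[of \<beta> A] b A by (simp add: Q_simps)
  qed
qed

end
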